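(* Every latent information prior (i.e. every Borel probability measure $\pi$ on $[0,1]$ maximizing $I(\pi)$ over all Borel probability measures on $[0,1]$) is a discrete distribution whose support consists of at most four points.
   Context: Bernoulli model: for $\theta\in[0,1]$, $p_\theta(x)=\theta^x(1-\theta)^{1-x}$, $x\in\{0,1\}$. One observes $x\sim p_\theta$ and predicts an independent future $y\sim p_\theta$. A nonrandomized decision is a pair $\delta=(\delta_0,\delta_1)\in\mathcal D=[0,1]^2$, used as the predictive distribution $p_\delta(y\mid x)=\delta_x^{\,y}(1-\delta_x)^{1-y}$. The Kullback–Leibler risk is $R_\delta(\theta)=-S(\theta)+\theta^2\log\frac1{\delta_1}+\theta(1-\theta)\log\frac1{1-\delta_1}+\theta(1-\theta)\log\frac1{\delta_0}+(1-\theta)^2\log\frac1{1-\delta_0}\in[0,+\infty]$, where $S(\theta)=-\theta\log\theta-(1-\theta)\log(1-\theta)$ is the binary entropy, with conventions $0\log 0=0$, $\log(1/0)=+\infty$, $0\cdot(+\infty)=0$. A prior is a Borel probability measure $\pi$ on $[0,1]$. The conditional mutual information of $\theta$ and $y$ given $x$ under $\pi$ is $I(\pi)=\min_{\delta\in\mathcal D}\int_{[0,1]}R_\delta(\theta)\,\pi(d\theta)$, i.e. the Bayes risk of the Bayesian predictive distribution $p_\pi(y\mid x)=\int p_\theta(y)p_\theta(x)\pi(d\theta)/\int p_\theta(x)\pi(d\theta)$. A latent information prior is a prior maximizing $I$ over all priors. *)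

theory Defs
  imports "HOL-Probability.Probability"
begin

definition bin_entropy :: "real \<Rightarrow> real" where
  "bin_entropy t = - (if t = 0 then 0 else t * ln t)
                   - (if t = 1 then 0 else (1 - t) * ln (1 - t))"

definition wlog_inv :: "real \<Rightarrow> real \<Rightarrow> ereal" where
  "wlog_inv c d = (if c = 0 then 0 else if d = 0 then \<infinity> else ereal (c * ln (1 / d)))"

definition KL_risk :: "real \<times> real \<Rightarrow> real \<Rightarrow> ereal" where
  "KL_risk \<delta> t = ereal (- bin_entropy t)
      + wlog_inv (t^2) (snd \<delta>) + wlog_inv (t * (1 - t)) (1 - snd \<delta>)
      + wlog_inv (t * (1 - t)) (fst \<delta>) + wlog_inv ((1 - t)^2) (1 - fst \<delta>)"

definition decisions :: "(real \<times> real) set" where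
  "decisions = {0..1} \<times> {0..1}"

text \<open>A prior: a Borel probability measure on [0,1], represented as a Borel
  probability measure on the real line giving full mass to [0,1].\<close>
definition is_prior :: "real measure \<Rightarrow> bool" where
  "is_prior M \<longleftrightarrow> sets M = sets borel \<and> prob_space M \<and> emeasure M {0..1} = 1"

text \<open>Bayes risk of a decision under a prior (the risk is nonnegative, so
  the conversion to ennreal is lossless).\<close>
definition bayes_risk :: "real measure \<Rightarrow> real \<times> real \<Rightarrow> ennreal" where
  "bayes_risk M \<delta> = (\<integral>\<^sup>+ t. e2ennreal (KL_risk \<delta> t) \<partial>M)"

definition cond_mutual_info :: "real measure \<Rightarrow> ennreal" where
  "cond_mutual_info M = (INF \<delta>\<in>decisions. bayes_risk M \<delta>)"

definition latent_information_prior :: "real measure \<Rightarrow> bool" where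
  "latent_information_prior M \<longleftrightarrow> is_prior M \<and>
     (\<forall>M'. is_prior M' \<longrightarrow> cond_mutual_info M' \<le> cond_mutual_info M)"

end

theory Submission
  imports Defs
begin


lemma rolle_real:
  fixes f f' :: "real \<Rightarrow> real"
  assumes "a < b" "f a = f b" "\<And>x. a \<le> x \<Longrightarrow> x \<le> b \<Longrightarrow> (f has_real_derivative f' x) (at x)"
  shows "\<exists>z. a < z \<and> z < b \<and> f' z = 0"
proof -
  have "continuous_on {a..b} f"
    using assms(3) by (intro continuous_at_imp_continuous_on ballI) (meson DERIV_isCont atLeastAtMost_iff)
  from Rolle_deriv[OF assms(1,2) this, of "\<lambda>x v. f' x * v"] assms(3)
  obtain z where "a < z" "z < b" "(\<lambda>v. f' z * v) = (\<lambda>v. 0)"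
    by (auto simp: has_field_derivative_def)
  then have "f' z = 0" by (metis mult.right_neutral)
  with \<open>a<z\<close> \<open>z<b\<close> show ?thesis by blast
qed

lemma gibbs:
  fixes p x :: real
  assumes "0 \<le> p" "p \<le> 1" "0 < x" "x < 1"
  shows "p * ln x + (1 - p) * ln (1 - x) \<le> - bin_entropy p"
proof (cases "p = 0 \<or> p = 1")
  case True
  then show ?thesis using assms by (auto simp: bin_entropy_def)
next
  case False
  then have p: "0 < p" "p < 1" using assms by auto
  have 1: "ln (x / p) \<le> x / p - 1" using p assms by (intro ln_le_minus_one) auto
  have 2: "ln ((1-x) / (1-p)) \<le> (1-x) / (1-p) - 1" using p assms by (intro ln_le_minus_one) auto
  have "p * ln (x/p) + (1-p) * ln ((1-x)/(1-p)) \<le> p * (x/p - 1) + (1-p) * ((1-x)/(1-p) - 1)"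
    using 1 2 p by (intro add_mono mult_left_mono) auto
  also have "\<dots> = 0" using p by (simp add: field_simps)
  finally have "p * ln (x/p) + (1-p) * ln ((1-x)/(1-p)) \<le> 0" .
  then show ?thesis using p assms by (simp add: bin_entropy_def ln_div algebra_simps)
qed

lemma xlnx_bound: "0 \<le> t \<Longrightarrow> t \<le> 1 \<Longrightarrow> \<bar>(if t = 0 then 0 else t * ln t)\<bar> \<le> (1::real)"
proof (cases "t = 0")
  case False
  assume t: "0 \<le> t" "t \<le> 1"
  then have tp: "0 < t" using False by auto
  have "ln t \<le> 0" using t tp by simp
  moreover have "ln t \<ge> 1 - 1 / t" using tp
    by (metis ln_inverse inverse_eq_divide ln_le_minus_one positive_imp_inverse_positive add.commute diff_conv_add_uminus minus_diff_eq neg_le_iff_le)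
  ultimately have "t * ln t \<le> 0" "t * ln t \<ge> t * (1 - 1/t)"
    using tp by (auto intro: mult_left_mono mult_nonneg_nonpos)
  moreover have "t * (1 - 1/t) = t - 1" using tp by (simp add: field_simps)
  ultimately have "t * ln t \<le> 0" "t * ln t \<ge> t - 1" by auto
  then show ?thesis using tp t False by (simp add: abs_if)
qed simp

lemma H_bound: "0 \<le> t \<Longrightarrow> t \<le> 1 \<Longrightarrow> \<bar>bin_entropy t\<bar> \<le> 2"
proof -
  assume t: "0 \<le> t" "t \<le> 1"
  have "\<bar>(if t = 0 then 0 else t * ln t)\<bar> \<le> 1" using xlnx_bound t by auto
  moreover have "\<bar>(if 1 - t = 0 then 0 else (1-t) * ln (1-t))\<bar> \<le> 1" using xlnx_bound[of "1-t"] t by auto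
  ultimately show ?thesis unfolding bin_entropy_def by (auto simp: abs_if split: if_splits)
qed

lemma H_nonneg: "0 \<le> t \<Longrightarrow> t \<le> 1 \<Longrightarrow> 0 \<le> bin_entropy (t::real)"
proof -
  assume t: "0 \<le> t" "t \<le> 1"
  have "(if t = 0 then 0 else t * ln t) \<le> 0" using t by (auto intro: mult_nonneg_nonpos)
  moreover have "(if t = 1 then 0 else (1-t) * ln (1-t)) \<le> 0" using t by (auto intro: mult_nonneg_nonpos)
  ultimately show ?thesis unfolding bin_entropy_def by linarith
qed

lemma H_meas[measurable]: "bin_entropy \<in> borel_measurable borel"
  unfolding bin_entropy_def by measurable

definition Lr :: "real \<Rightarrow> real \<Rightarrow> real \<Rightarrow> real" where
  "Lr d0 d1 t = - bin_entropy t - t^2 * ln d1 - t * (1 - t) * ln (1 - d1)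
      - t * (1 - t) * ln d0 - (1 - t)^2 * ln (1 - d0)"

lemma Lr_meas[measurable]: "Lr d0 d1 \<in> borel_measurable borel"
  unfolding Lr_def by measurable

lemma KL_real:
  assumes "0 < d0" "d0 < 1" "0 < d1" "d1 < 1"
  shows "KL_risk (d0, d1) t = ereal (Lr d0 d1 t)"
  using assms by (simp add: KL_risk_def wlog_inv_def Lr_def ln_div)

lemma Lr_nonneg:
  assumes "0 < d0" "d0 < 1" "0 < d1" "d1 < 1" "0 \<le> t" "t \<le> 1"
  shows "0 \<le> Lr d0 d1 t"
proof -
  have "t * (t * ln d1 + (1 - t) * ln (1 - d1)) \<le> t * (- bin_entropy t)"
    using assms gibbs[of t d1] by (intro mult_left_mono) auto
  moreover have "(1-t) * (t * ln d0 + (1 - t) * ln (1 - d0)) \<le> (1-t) * (- bin_entropy t)"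
    using assms gibbs[of t d0] by (intro mult_left_mono) auto
  ultimately show ?thesis unfolding Lr_def by (simp add: algebra_simps power2_eq_square)
qed

lemma prior_basic:
  assumes "is_prior M"
  shows "prob_space M" "sets M = sets borel" "AE t in M. 0 \<le> t \<and> t \<le> 1"
proof -
  show P: "prob_space M" "sets M = sets borel" using assms by (auto simp: is_prior_def)
  then interpret prob_space M by simp
  have "prob {0..1} = 1" using assms by (simp add: is_prior_def measure_def)
  from AE_prob_1[OF this] show "AE t in M. 0 \<le> t \<and> t \<le> 1" by simp
qed

lemma prior_meas: "is_prior M \<Longrightarrow> f \<in> borel_measurable borel \<Longrightarrow> f \<in> borel_measurable M"
  using prior_basic(2) measurable_cong_sets by blast

lemma prior_int:
  fixes f :: "real \<Rightarrow> real"
  assumes "is_prior M" "f \<in> borel_measurable borel" "\<And>t. 0 \<le> t \<Longrightarrow> t \<le> 1 \<Longrightarrow> \<bar>f t\<bar> \<le> C"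
  shows "integrable M f"
proof -
  interpret prob_space M using prior_basic[OF assms(1)] by simp
  show ?thesis
    apply (rule integrable_const_bound[where B=C])
    using prior_basic(3)[OF assms(1)] assms(3) apply (auto elim!: AE_mp)[1]
    using prior_meas[OF assms(1,2)] .
qed

definition mA where "mA M = (\<integral>t. t^2 \<partial>M)"
definition mB where "mB M = (\<integral>t. t * (1 - t) \<partial>M)"
definition mC where "mC M = (\<integral>t. (1 - t)^2 \<partial>M)"
definition mH where "mH M = (\<integral>t. bin_entropy t \<partial>M)"

lemma int_t2: "is_prior M \<Longrightarrow> integrable M (\<lambda>t. t^2)"
  by (rule prior_int[where C=1]) (auto simp: abs_square_le_1)
lemma int_tt: "is_prior M \<Longrightarrow> integrable M (\<lambda>t. t * (1 - t))"
  by (rule prior_int[where C=1]) (auto simp: abs_mult intro!: mult_le_one)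
lemma int_t2': "is_prior M \<Longrightarrow> integrable M (\<lambda>t. (1 - t)^2)"
  by (rule prior_int[where C=1]) (auto simp: abs_square_le_1)
lemma int_H: "is_prior M \<Longrightarrow> integrable M bin_entropy"
  by (rule prior_int[where C=2]) (auto simp: H_bound)

lemma int_Lr:
  assumes "is_prior M"
  shows "(\<integral>t. Lr d0 d1 t \<partial>M) = - mH M - mA M * ln d1 - mB M * ln (1 - d1) - mB M * ln d0 - mC M * ln (1 - d0)"
proof -
  note I = int_t2[OF assms] int_tt[OF assms] int_t2'[OF assms] int_H[OF assms]
  show ?thesis unfolding Lr_def mA_def mB_def mC_def mH_def
    using I by (simp add: Bochner_Integration.integral_diff integrable_mult_left)
qed

lemma bayes_interior:
  assumes "is_prior M" "0 < d0" "d0 < 1" "0 < d1" "d1 < 1"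
  shows "bayes_risk M (d0, d1) = ennreal (\<integral>t. Lr d0 d1 t \<partial>M)" "0 \<le> (\<integral>t. Lr d0 d1 t \<partial>M)"
proof -
  have B: "\<And>t. 0 \<le> t \<Longrightarrow> t \<le> 1 \<Longrightarrow> \<bar>Lr d0 d1 t\<bar> \<le> 2 + \<bar>ln d1\<bar> + \<bar>ln (1-d1)\<bar> + \<bar>ln d0\<bar> + \<bar>ln (1-d0)\<bar>"
  proof -
    fix t :: real assume t: "0 \<le> t" "t \<le> 1"
    have a: "\<bar>t^2\<bar> \<le> 1" "\<bar>t * (1-t)\<bar> \<le> 1" "\<bar>(1-t)^2\<bar> \<le> 1"
      using t by (auto simp: abs_square_le_1 abs_mult intro!: mult_le_one)
    have "\<bar>t^2 * ln d1\<bar> \<le> \<bar>ln d1\<bar>" "\<bar>t * (1-t) * ln (1-d1)\<bar> \<le> \<bar>ln (1-d1)\<bar>"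
      "\<bar>t * (1-t) * ln d0\<bar> \<le> \<bar>ln d0\<bar>" "\<bar>(1-t)^2 * ln (1-d0)\<bar> \<le> \<bar>ln (1-d0)\<bar>"
      using a unfolding abs_mult by (auto intro: mult_left_le_one_le simp del: abs_mult_self_eq)
    with H_bound[OF t] show "\<bar>Lr d0 d1 t\<bar> \<le> 2 + \<bar>ln d1\<bar> + \<bar>ln (1-d1)\<bar> + \<bar>ln d0\<bar> + \<bar>ln (1-d0)\<bar>"
      unfolding Lr_def by linarith
  qed
  have int: "integrable M (Lr d0 d1)" by (rule prior_int[OF assms(1) _ B]) auto
  have nn: "AE t in M. 0 \<le> Lr d0 d1 t"
    using prior_basic(3)[OF assms(1)] by (rule AE_mp) (auto intro!: Lr_nonneg assms)
  have "bayes_risk M (d0, d1) = (\<integral>\<^sup>+t. ennreal (Lr d0 d1 t) \<partial>M)"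
    unfolding bayes_risk_def using assms by (simp add: KL_real)
  also have "\<dots> = ennreal (\<integral>t. Lr d0 d1 t \<partial>M)"
    using int nn by (rule nn_integral_eq_integral)
  finally show "bayes_risk M (d0, d1) = ennreal (\<integral>t. Lr d0 d1 t \<partial>M)" .
  show "0 \<le> (\<integral>t. Lr d0 d1 t \<partial>M)" using nn by (rule integral_nonneg_AE)
qed



lemma wlog_nonneg: "0 \<le> c \<Longrightarrow> 0 \<le> d \<Longrightarrow> d \<le> 1 \<Longrightarrow> 0 \<le> wlog_inv c d"
  by (auto simp: wlog_inv_def ln_div intro!: mult_nonneg_nonpos)

lemma KL_inf:
  assumes "(d0, d1) \<in> decisions" "0 \<le> t" "t \<le> 1"
    and "(d1 = 0 \<and> t \<noteq> 0) \<or> (d1 = 1 \<and> t * (1 - t) \<noteq> 0) \<or> (d0 = 0 \<and> t * (1 - t) \<noteq> 0) \<or> (d0 = 1 \<and> t \<noteq> 1)"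
  shows "KL_risk (d0, d1) t = \<infinity>"
proof -
  have d: "0 \<le> d0" "d0 \<le> 1" "0 \<le> d1" "d1 \<le> 1" using assms(1) by (auto simp: decisions_def)
  have tt: "0 \<le> t * (1 - t)" using assms by auto
  define w1 where "w1 = wlog_inv (t^2) d1"
  define w2 where "w2 = wlog_inv (t * (1 - t)) (1 - d1)"
  define w3 where "w3 = wlog_inv (t * (1 - t)) d0"
  define w4 where "w4 = wlog_inv ((1 - t)^2) (1 - d0)"
  have w: "0 \<le> w1" "0 \<le> w2" "0 \<le> w3" "0 \<le> w4"
    unfolding w1_def w2_def w3_def w4_def using d tt by (auto intro!: wlog_nonneg)
  have "w1 = \<infinity> \<or> w2 = \<infinity> \<or> w3 = \<infinity> \<or> w4 = \<infinity>"
    using assms(4) unfolding w1_def w2_def w3_def w4_def by (auto simp: wlog_inv_def)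
  then have "ereal (- bin_entropy t) + w1 + w2 + w3 + w4 = \<infinity>"
    using w by (cases w1; cases w2; cases w3; cases w4) auto
  then show ?thesis by (simp add: KL_risk_def w1_def w2_def w3_def w4_def)
qed

lemma pos_set:
  assumes "is_prior M" "A \<in> sets borel" "f \<in> borel_measurable borel"
    "\<And>t. 0 \<le> t \<Longrightarrow> t \<le> 1 \<Longrightarrow> t \<notin> A \<Longrightarrow> f t = 0"
    "(\<integral>t. f t \<partial>M) \<noteq> 0"
  shows "emeasure M A \<noteq> 0"
proof
  assume "emeasure M A = 0"
  then have "AE t in M. t \<notin> A"
    using assms(2) prior_basic(2)[OF assms(1)] by (intro AE_I'[of A]) auto
  with prior_basic(3)[OF assms(1)] have "AE t in M. f t = 0"
    by eventually_elim (use assms(4) in auto)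
  then have "(\<integral>t. f t \<partial>M) = (\<integral>t. 0 \<partial>M)"
    using prior_meas[OF assms(1,3)] by (intro integral_cong_AE) auto
  with assms(5) show False by simp
qed

lemma bayes_infinite:
  assumes "is_prior M" "A \<in> sets borel" "emeasure M A \<noteq> 0" "\<And>t. t \<in> A \<Longrightarrow> KL_risk \<delta> t = \<infinity>"
  shows "bayes_risk M \<delta> = \<infinity>"
proof -
  have "(\<integral>\<^sup>+t. \<infinity> * indicator A t \<partial>M) \<le> bayes_risk M \<delta>"
    unfolding bayes_risk_def by (intro nn_integral_mono) (auto simp: assms(4) split: split_indicator)
  moreover have "(\<integral>\<^sup>+t. \<infinity> * indicator A t \<partial>M) = \<infinity>"
    using assms(2,3) prior_basic(2)[OF assms(1)] by (simp add: nn_integral_cmult_indicator ennreal_mult_top)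
  ultimately show ?thesis by (simp add: top_unique)
qed

lemma gibbs2:
  fixes a b x :: real
  assumes "0 < a" "0 < b" "0 < x" "x < 1"
  shows "a * ln x + b * ln (1 - x) \<le> a * ln (a / (a + b)) + b * ln (1 - a / (a + b))"
proof -
  define p where "p = a / (a + b)"
  have p: "0 < p" "p < 1" "1 - p = b / (a + b)" using assms by (auto simp: p_def field_simps)
  have ab: "(a + b) * p = a" "(a + b) * (1 - p) = b" using assms p by (auto simp: p_def field_simps)
  have E: "\<And>X Y. (a + b) * (p * X + (1 - p) * Y) = ((a + b) * p) * X + ((a + b) * (1 - p)) * Y"
    by (simp add: algebra_simps)
  have "a * ln x + b * ln (1 - x) = (a + b) * (p * ln x + (1 - p) * ln (1 - x))"
    unfolding E ab ..
  also have "\<dots> \<le> (a + b) * (- bin_entropy p)"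
    using gibbs[of p x] assms p by (intro mult_left_mono) auto
  also have "\<dots> = (a + b) * (p * ln p + (1 - p) * ln (1 - p))"
    using p by (simp add: bin_entropy_def)
  also have "\<dots> = a * ln p + b * ln (1 - p)"
    unfolding E ab ..
  finally show ?thesis by (simp add: p_def)
qed

lemma bayes_opt:
  assumes M: "is_prior M" and pos: "0 < mA M" "0 < mB M" "0 < mC M"
  defines "p1 \<equiv> mA M / (mA M + mB M)" and "p0 \<equiv> mB M / (mB M + mC M)"
  shows "0 < p0" "p0 < 1" "0 < p1" "p1 < 1"
    "cond_mutual_info M = ennreal (\<integral>t. Lr p0 p1 t \<partial>M)"
proof -
  show p: "0 < p0" "p0 < 1" "0 < p1" "p1 < 1" using pos by (auto simp: p0_def p1_def field_simps)
  have le: "bayes_risk M (p0, p1) \<le> bayes_risk M \<delta>" if "\<delta> \<in> decisions" for \<delta>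
  proof -
    obtain d0 d1 where dd: "\<delta> = (d0, d1)" by (cases \<delta>)
    have d: "0 \<le> d0" "d0 \<le> 1" "0 \<le> d1" "d1 \<le> 1" using that dd by (auto simp: decisions_def)
    show ?thesis
    proof (cases "0 < d0 \<and> d0 < 1 \<and> 0 < d1 \<and> d1 < 1")
      case True
      have g1: "mA M * ln d1 + mB M * ln (1 - d1) \<le> mA M * ln p1 + mB M * ln (1 - p1)"
        unfolding p1_def using True pos by (intro gibbs2) auto
      have g2: "mB M * ln d0 + mC M * ln (1 - d0) \<le> mB M * ln p0 + mC M * ln (1 - p0)"
        unfolding p0_def using True pos by (intro gibbs2) auto
      show ?thesis unfolding dd
        using bayes_interior[OF M p] bayes_interior[OF M, of d0 d1] True g1 g2
        by (auto simp: int_Lr[OF M] intro!: ennreal_leI)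
    next
      case False
      have "bayes_risk M \<delta> = \<infinity>"
      proof -
        have "d1 = 0 \<or> d1 = 1 \<or> d0 = 0 \<or> d0 = 1" using False d by auto
        then show ?thesis
        proof (elim disjE)
          assume h: "d1 = 0"
          show ?thesis
          proof (rule bayes_infinite[OF M, of "{0<..1}"])
            show "emeasure M {0<..1} \<noteq> 0"
              by (rule pos_set[OF M _ _ _ , of _ "\<lambda>t. t^2"]) (use pos in \<open>auto simp: mA_def\<close>)
          qed (use h that dd in \<open>auto intro!: KL_inf\<close>)
        next
          assume h: "d1 = 1"
          show ?thesis
          proof (rule bayes_infinite[OF M, of "{0<..<1}"])
            show "emeasure M {0<..<1} \<noteq> 0"
              by (rule pos_set[OF M _ _ _ , of _ "\<lambda>t. t * (1 - t)"]) (use pos in \<open>auto simp: mB_def\<close>)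
          qed (use h that dd in \<open>auto intro!: KL_inf\<close>)
        next
          assume h: "d0 = 0"
          show ?thesis
          proof (rule bayes_infinite[OF M, of "{0<..<1}"])
            show "emeasure M {0<..<1} \<noteq> 0"
              by (rule pos_set[OF M _ _ _ , of _ "\<lambda>t. t * (1 - t)"]) (use pos in \<open>auto simp: mB_def\<close>)
          qed (use h that dd in \<open>auto intro!: KL_inf\<close>)
        next
          assume h: "d0 = 1"
          show ?thesis
          proof (rule bayes_infinite[OF M, of "{0..<1}"])
            show "emeasure M {0..<1} \<noteq> 0"
              by (rule pos_set[OF M _ _ _ , of _ "\<lambda>t. (1 - t)^2"]) (use pos in \<open>auto simp: mC_def\<close>)
          qed (use h that dd in \<open>auto intro!: KL_inf\<close>)
        qed
      qed
      then show ?thesis by simp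
    qed
  qed
  have mem: "(p0, p1) \<in> decisions" using p by (auto simp: decisions_def)
  have "cond_mutual_info M = bayes_risk M (p0, p1)"
    unfolding cond_mutual_info_def
    by (rule antisym) (auto intro!: INF_lower INF_greatest mem le)
  then show "cond_mutual_info M = ennreal (\<integral>t. Lr p0 p1 t \<partial>M)"
    using bayes_interior[OF M p] by simp
qed



definition mixp :: "real \<Rightarrow> real \<Rightarrow> real measure \<Rightarrow> real measure" where
  "mixp e t0 M = measure_pmf (bernoulli_pmf e) \<bind> (\<lambda>b. if b then return borel t0 else M)"

lemma mix_kernel:
  assumes "is_prior M"
  shows "(\<lambda>b. if b then return borel t0 else M) \<in> measurable (measure_pmf (bernoulli_pmf e)) (subprob_algebra borel)"
  using prior_basic[OF assms]
  by (auto simp: space_subprob_algebra prob_space_imp_subprob_space prob_space_return)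

lemma mix_sets: "is_prior M \<Longrightarrow> sets (mixp e t0 M) = sets borel"
  unfolding mixp_def by (subst sets_bind[where N=borel]) (auto simp: prior_basic)

lemma mix_nn:
  assumes M: "is_prior M" and e: "0 \<le> e" "e \<le> 1" and f: "f \<in> borel_measurable borel"
  shows "(\<integral>\<^sup>+t. f t \<partial>mixp e t0 M) = f t0 * ennreal e + (\<integral>\<^sup>+t. f t \<partial>M) * ennreal (1 - e)"
proof -
  have "(\<integral>\<^sup>+t. f t \<partial>mixp e t0 M) =
     (\<integral>\<^sup>+b. (\<integral>\<^sup>+t. f t \<partial>(if b then return borel t0 else M)) \<partial>measure_pmf (bernoulli_pmf e))"
    unfolding mixp_def by (rule nn_integral_bind[OF f mix_kernel[OF M]])
  also have "\<dots> = f t0 * ennreal e + (\<integral>\<^sup>+t. f t \<partial>M) * ennreal (1 - e)"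
    using e f by (simp add: nn_integral_return)
  finally show ?thesis .
qed

lemma mix_prior:
  assumes M: "is_prior M" and e: "0 \<le> e" "e \<le> 1" and t0: "0 \<le> t0" "t0 \<le> 1"
  shows "is_prior (mixp e t0 M)"
proof -
  interpret prob_space M using prior_basic[OF M] by simp
  have S: "sets (mixp e t0 M) = sets borel" by (rule mix_sets[OF M])
  then have sp: "space (mixp e t0 M) = UNIV" using sets_eq_imp_space_eq by fastforce
  have "emeasure (mixp e t0 M) UNIV = (\<integral>\<^sup>+t. indicator UNIV t \<partial>mixp e t0 M)"
    using S by (subst nn_integral_indicator) auto
  also have "\<dots> = 1"
    using e by (subst mix_nn[OF M e]) (auto simp: emeasure_space_1[simplified prior_basic(2)[OF M] space_borel]
       ennreal_plus[symmetric] simp del: ennreal_plus)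
  finally have P: "prob_space (mixp e t0 M)" by (intro prob_spaceI) (simp add: sp)
  have "emeasure (mixp e t0 M) {0..1} = (\<integral>\<^sup>+t. indicator {0..1} t \<partial>mixp e t0 M)"
    using S by (subst nn_integral_indicator) auto
  also have "\<dots> = 1"
    using e t0 M by (subst mix_nn[OF M e]) (auto simp: is_prior_def
       ennreal_plus[symmetric] simp del: ennreal_plus)
  finally show ?thesis using P S by (simp add: is_prior_def)
qed

lemma int_via_nn:
  assumes N: "is_prior N" and f: "f \<in> borel_measurable borel"
    and b: "\<And>t. 0 \<le> t \<Longrightarrow> t \<le> 1 \<Longrightarrow> 0 \<le> f t \<and> f t \<le> C"
  shows "(\<integral>\<^sup>+t. ennreal (f t) \<partial>N) = ennreal (\<integral>t. f t \<partial>N)"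
proof (rule nn_integral_eq_integral)
  show "integrable N f" by (rule prior_int[OF N f, of C]) (use b in force)
  show "AE t in N. 0 \<le> f t" using prior_basic(3)[OF N] by (rule AE_mp) (use b in auto)
qed

lemma int_mix:
  assumes M: "is_prior M" and e: "0 \<le> e" "e \<le> 1" and t0: "0 \<le> t0" "t0 \<le> 1"
    and f: "f \<in> borel_measurable borel"
    and b: "\<And>t. 0 \<le> t \<Longrightarrow> t \<le> 1 \<Longrightarrow> 0 \<le> f t \<and> f t \<le> C"
  shows "(\<integral>t. f t \<partial>mixp e t0 M) = e * f t0 + (1 - e) * (\<integral>t. f t \<partial>M)"
proof -
  have N: "is_prior (mixp e t0 M)" by (rule mix_prior[OF M e t0])
  have i0: "0 \<le> (\<integral>t. f t \<partial>M)"
    using prior_basic(3)[OF M] by (intro integral_nonneg_AE) (auto elim!: AE_mp simp: b)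
  have i1: "0 \<le> (\<integral>t. f t \<partial>mixp e t0 M)"
    using prior_basic(3)[OF N] by (intro integral_nonneg_AE) (auto elim!: AE_mp simp: b)
  have ft0: "0 \<le> f t0" using b t0 by auto
  have "ennreal (\<integral>t. f t \<partial>mixp e t0 M) = (\<integral>\<^sup>+t. ennreal (f t) \<partial>mixp e t0 M)"
    by (rule int_via_nn[OF N f b, symmetric])
  also have "\<dots> = ennreal (f t0) * ennreal e + ennreal (\<integral>t. f t \<partial>M) * ennreal (1 - e)"
    by (subst mix_nn[OF M e]) (use f int_via_nn[OF M f b] in auto)
  also have "\<dots> = ennreal (e * f t0 + (1 - e) * (\<integral>t. f t \<partial>M))"
    using e ft0 i0 by (simp add: ennreal_mult[symmetric] ennreal_plus[symmetric] mult.commute del: ennreal_plus)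
  finally show ?thesis using i1 e ft0 i0 by (subst (asm) ennreal_inj) auto
qed



lemma perturb:
  assumes L: "latent_information_prior M" and pos: "0 < mA M" "0 < mB M" "0 < mC M"
    and t0: "0 \<le> t0" "t0 \<le> 1"
  defines "p1 \<equiv> mA M / (mA M + mB M)" and "p0 \<equiv> mB M / (mB M + mC M)"
  shows "Lr p0 p1 t0 \<le> (\<integral>t. Lr p0 p1 t \<partial>M)"
proof -
  have M: "is_prior M" using L by (simp add: latent_information_prior_def)
  note BO = bayes_opt[OF M pos, folded p0_def p1_def]
  define V where "V = (\<integral>t. Lr p0 p1 t \<partial>M)"
  have V0: "0 \<le> V" unfolding V_def using bayes_interior(2)[OF M BO(1-4)] .
  have IM: "cond_mutual_info M = ennreal V" using BO(5) by (simp add: V_def)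
  define a where "a = mA M"
  define b where "b = mB M"
  define c where "c = mC M"
  define h where "h = mH M"
  define A where "A = (\<lambda>e::real. e * t0^2 + (1 - e) * a)"
  define B where "B = (\<lambda>e::real. e * (t0 * (1 - t0)) + (1 - e) * b)"
  define C where "C = (\<lambda>e::real. e * (1 - t0)^2 + (1 - e) * c)"
  define Q1 where "Q1 = (\<lambda>e. A e / (A e + B e))"
  define Q0 where "Q0 = (\<lambda>e. B e / (B e + C e))"
  have key: "Lr (Q0 e) (Q1 e) t0 \<le> V" if e: "0 < e" "e < 1" for e
  proof -
    have e': "0 \<le> e" "e \<le> 1" using e by auto
    define N where "N = mixp e t0 M"
    have N: "is_prior N" unfolding N_def by (rule mix_prior[OF M e' t0])
    have tt: "0 \<le> t0 * (1 - t0)" using t0 by auto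
    have mAN: "mA N = A e" unfolding mA_def N_def A_def a_def
      by (subst int_mix[OF M e' t0, where C=1]) (auto simp: mA_def power_le_one)
    have mBN: "mB N = B e" unfolding mB_def N_def B_def b_def
      by (subst int_mix[OF M e' t0, where C=1]) (auto simp: mB_def intro!: mult_le_one)
    have mCN: "mC N = C e" unfolding mC_def N_def C_def c_def
      by (subst int_mix[OF M e' t0, where C=1]) (auto simp: mC_def power_le_one)
    have mHN: "mH N = e * bin_entropy t0 + (1 - e) * h" unfolding mH_def N_def h_def
      apply (subst int_mix[OF M e' t0, where C=2])
      using H_nonneg H_bound by (auto simp: mH_def abs_le_iff)
    have Ap: "0 < A e" unfolding A_def using pos e by (intro add_nonneg_pos) (auto simp: a_def)
    have Bp: "0 < B e" unfolding B_def using pos e tt by (intro add_nonneg_pos) (auto simp: b_def)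
    have Cp: "0 < C e" unfolding C_def using pos e by (intro add_nonneg_pos) (auto simp: c_def)
    note BN = bayes_opt[OF N, unfolded mAN mBN mCN, OF Ap Bp Cp, folded Q0_def[THEN fun_cong] Q1_def[THEN fun_cong]]
    define W where "W = (\<integral>t. Lr (Q0 e) (Q1 e) t \<partial>M)"
    have W0: "0 \<le> W" unfolding W_def using bayes_interior(2)[OF M BN(1-4)] .
    have "ennreal V \<le> bayes_risk M (Q0 e, Q1 e)"
      unfolding IM[symmetric] cond_mutual_info_def
      using BN(1-4) by (intro INF_lower) (auto simp: decisions_def)
    then have VW: "V \<le> W" using bayes_interior(1)[OF M BN(1-4)] W0 by (simp add: W_def)
    have intN: "(\<integral>t. Lr (Q0 e) (Q1 e) t \<partial>N) = e * Lr (Q0 e) (Q1 e) t0 + (1 - e) * W"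
      unfolding int_Lr[OF N] W_def int_Lr[OF M] mAN mBN mCN mHN
      by (simp add: Lr_def A_def B_def C_def a_def b_def c_def h_def algebra_simps)
    have "cond_mutual_info N \<le> cond_mutual_info M" using L N by (simp add: latent_information_prior_def)
    then have "ennreal (e * Lr (Q0 e) (Q1 e) t0 + (1 - e) * W) \<le> ennreal V"
      using BN(5) IM intN by simp
    then have "e * Lr (Q0 e) (Q1 e) t0 + (1 - e) * W \<le> V" using V0 by (simp add: ennreal_le_iff)
    moreover have "(1 - e) * V \<le> (1 - e) * W" using VW e by (intro mult_left_mono) auto
    moreover have "e * V = V - (1 - e) * V" by (simp add: algebra_simps)
    ultimately have "e * Lr (Q0 e) (Q1 e) t0 \<le> e * V" by linarith
    then show ?thesis using e by simp
  qed
  define F where "F = (\<lambda>e. Lr (Q0 e) (Q1 e) t0)"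
  have Q00: "Q0 0 = p0" "Q1 0 = p1"
    by (simp_all add: Q0_def Q1_def A_def B_def C_def p0_def p1_def a_def b_def c_def)
  have A0: "A 0 > 0" "B 0 > 0" "C 0 > 0" using pos by (simp_all add: A_def B_def C_def a_def b_def c_def)
  have cA: "isCont A 0" "isCont B 0" "isCont C 0" unfolding A_def B_def C_def by (intro continuous_intros)+
  have cQ: "isCont Q0 0" "isCont Q1 0" unfolding Q0_def Q1_def
    using A0 cA by (auto intro!: continuous_intros)
  have "isCont F 0" unfolding F_def Lr_def
    using cQ BO(1-4) Q00 by (auto intro!: continuous_intros)
  then have "(F \<longlongrightarrow> F 0) (at_right 0)"
    by (meson at_within_le_at filterlim_mono isContD order_refl)
  moreover have "eventually (\<lambda>e. F e \<le> V) (at_right 0)"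
    using eventually_at_right_real[of "0::real" 1] by (rule eventually_mono) (auto simp: F_def key)
  ultimately have "F 0 \<le> V" by (intro tendsto_upperbound) auto
  then show ?thesis by (simp add: F_def Q00 V_def)
qed



lemma recip_eq:
  fixes q r :: real
  assumes "0 < q" "q < 1" "0 < r" "r < 1" "1/q + 1/(1-q) = 1/r + 1/(1-r)"
  shows "q * (1 - q) = r * (1 - r)"
proof -
  have "1/q + 1/(1-q) = 1 / (q * (1 - q))" using assms by (simp add: field_simps)
  moreover have "1/r + 1/(1-r) = 1 / (r * (1 - r))" using assms by (simp add: field_simps)
  ultimately have "1 / (q * (1 - q)) = 1 / (r * (1 - r))" using assms by simp
  then show ?thesis by simp
qed

lemma three_max:
  fixes l1 l2 l3 l4 V x y z :: real
  defines "G \<equiv> \<lambda>t. t * ln t + (1 - t) * ln (1 - t) - t^2 * l1 - t * (1 - t) * l2 - t * (1 - t) * l3 - (1 - t)^2 * l4"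
  assumes le: "\<And>t. 0 < t \<Longrightarrow> t < 1 \<Longrightarrow> G t \<le> V"
    and xyz: "0 < x" "x < y" "y < z" "z < 1" and eq: "G x = V" "G y = V" "G z = V"
  shows False
proof -
  define G1 where "G1 = (\<lambda>t. ln t - ln (1 - t) - 2 * t * l1 - (1 - 2 * t) * (l2 + l3) + 2 * (1 - t) * l4)"
  define G2 where "G2 = (\<lambda>t. 1 / t + 1 / (1 - t) - 2 * l1 + 2 * (l2 + l3) - 2 * l4)"
  have dG: "(G has_real_derivative G1 t) (at t)" if "0 < t" "t < 1" for t
    unfolding G_def G1_def apply (insert that)
    apply (rule derivative_eq_intros refl | simp)+
    apply (simp add: algebra_simps)
    done
  have dG1: "(G1 has_real_derivative G2 t) (at t)" if "0 < t" "t < 1" for t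
    unfolding G2_def G1_def apply (insert that)
    apply (rule derivative_eq_intros refl | simp)+
    done
  have crit: "G1 w = 0" if "0 < w" "w < 1" "G w = V" for w
  proof (rule DERIV_local_max[OF dG[OF that(1,2)]])
    show "0 < min w (1 - w)" using that by simp
    show "\<forall>v. \<bar>w - v\<bar> < min w (1 - w) \<longrightarrow> G v \<le> G w"
      using that le by (auto simp: abs_less_iff)
  qed
  have Gx: "G1 x = 0" "G1 y = 0" "G1 z = 0" using crit xyz eq by auto
  obtain u where u: "x < u" "u < y" "G1 u = 0"
    using rolle_real[of x y G G1] xyz eq dG by auto
  obtain v where v: "y < v" "v < z" "G1 v = 0"
    using rolle_real[of y z G G1] xyz eq dG by auto
  obtain q1 where q1: "x < q1" "q1 < u" "G2 q1 = 0"
    using rolle_real[of x u G1 G2] xyz u Gx dG1 by auto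
  obtain q2 where q2: "u < q2" "q2 < y" "G2 q2 = 0"
    using rolle_real[of u y G1 G2] xyz u Gx dG1 by auto
  obtain q3 where q3: "y < q3" "q3 < v" "G2 q3 = 0"
    using rolle_real[of y v G1 G2] xyz v Gx dG1 by auto
  have "q1 * (1 - q1) = q2 * (1 - q2)"
    by (rule recip_eq) (use q1 q2 u v xyz in \<open>auto simp: G2_def\<close>)
  moreover have "q1 * (1 - q1) = q3 * (1 - q3)"
    by (rule recip_eq) (use q1 q3 u v xyz in \<open>auto simp: G2_def\<close>)
  ultimately have "(q2 - q3) * (q2 + q3 - 1) = 0" by (simp add: algebra_simps)
  moreover have "(q1 - q2) * (q1 + q2 - 1) = 0" using \<open>q1 * (1 - q1) = q2 * (1 - q2)\<close> by (simp add: algebra_simps)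
  ultimately show False using q1 q2 q3 u v by auto
qed



lemma card_le2:
  fixes T :: "real set"
  assumes H: "\<And>x y z. x \<in> T \<Longrightarrow> y \<in> T \<Longrightarrow> z \<in> T \<Longrightarrow> x < y \<Longrightarrow> y < z \<Longrightarrow> False"
  shows "finite T \<and> card T \<le> 2"
proof (rule ccontr)
  assume "\<not> (finite T \<and> card T \<le> 2)"
  then obtain B where B: "B \<subseteq> T" "card B = 3"
  proof (cases "finite T")
    case True
    with \<open>\<not> (finite T \<and> card T \<le> 2)\<close> have "3 \<le> card T" by auto
    then show ?thesis using that obtain_subset_with_card_n by metis
  next
    case False
    then show ?thesis using that infinite_arbitrarily_large by metis
  qed
  then obtain x y z where xyz: "B = {x, y, z}" "x \<noteq> y" "y \<noteq> z" "x \<noteq> z"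
    by (auto simp: card_3_iff)
  have T: "x \<in> T" "y \<in> T" "z \<in> T" using B xyz by auto
  show False
  proof (cases "x < y")
    case True
    then show ?thesis
      using H[of x y z] H[of x z y] H[of z x y] T xyz by (cases "y < z"; cases "x < z") auto
  next
    case False
    then have "y < x" using xyz by auto
    then show ?thesis
      using H[of y x z] H[of y z x] H[of z y x] T xyz by (cases "x < z"; cases "y < z") auto
  qed
qed

lemma Lr_eq_G:
  "0 < t \<Longrightarrow> t < 1 \<Longrightarrow> Lr d0 d1 t = t * ln t + (1 - t) * ln (1 - t) - t^2 * ln d1
     - t * (1 - t) * ln (1 - d1) - t * (1 - t) * ln d0 - (1 - t)^2 * ln (1 - d0)"
  by (simp add: Lr_def bin_entropy_def)

theorem lemma2:
  assumes "latent_information_prior M"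
  shows "\<exists>S. finite S \<and> card S \<le> 4 \<and> S \<subseteq> {0..1} \<and> emeasure M S = 1"
proof -
  have M: "is_prior M" using assms by (simp add: latent_information_prior_def)
  interpret prob_space M using prior_basic(1)[OF M] .
  have sM: "sets M = sets borel" by (rule prior_basic(2)[OF M])
  have AE01: "AE t in M. 0 \<le> t \<and> t \<le> 1" by (rule prior_basic(3)[OF M])
  have nnB: "AE t in M. 0 \<le> t * (1 - t)" using AE01 by eventually_elim auto
  have mB0: "0 \<le> mB M" unfolding mB_def using nnB by (rule integral_nonneg_AE)
  show ?thesis
  proof (cases "mB M = 0")
    case True
    have "AE t in M. t * (1 - t) = 0"
      using integral_nonneg_eq_0_iff_AE[OF int_tt[OF M] nnB] True by (simp add: mB_def)
    then have "AE t in M. t \<in> {0, 1}" using AE01 by eventually_elim auto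
    then have "emeasure M {0, 1} = 1" by (intro emeasure_eq_1_AE) (auto simp: sM)
    then show ?thesis by (intro exI[of _ "{0,1}"]) auto
  next
    case False
    then have posB: "0 < mB M" using mB0 by auto
    have zB: "mB M = 0" if "AE t in M. t * (1 - t) = 0"
    proof -
      have "mB M = (\<integral>t. 0 \<partial>M)" unfolding mB_def
        using that by (intro integral_cong_AE) (auto intro!: prior_meas[OF M])
      then show ?thesis by simp
    qed
    have posA: "0 < mA M"
    proof -
      have nn: "AE t in M. 0 \<le> t^2" by simp
      have "0 \<le> mA M" unfolding mA_def using nn by (rule integral_nonneg_AE)
      moreover have "mA M \<noteq> 0"
      proof
        assume "mA M = 0"
        then have "AE t in M. t^2 = 0"
          using integral_nonneg_eq_0_iff_AE[OF int_t2[OF M] nn] by (simp add: mA_def)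
        then have "AE t in M. t * (1 - t) = 0" by eventually_elim auto
        then show False using zB posB by simp
      qed
      ultimately show ?thesis by auto
    qed
    have posC: "0 < mC M"
    proof -
      have nn: "AE t in M. 0 \<le> (1 - t)^2" by simp
      have "0 \<le> mC M" unfolding mC_def using nn by (rule integral_nonneg_AE)
      moreover have "mC M \<noteq> 0"
      proof
        assume "mC M = 0"
        then have "AE t in M. (1 - t)^2 = 0"
          using integral_nonneg_eq_0_iff_AE[OF int_t2'[OF M] nn] by (simp add: mC_def)
        then have "AE t in M. t * (1 - t) = 0" by eventually_elim auto
        then show False using zB posB by simp
      qed
      ultimately show ?thesis by auto
    qed
    define p1 where "p1 = mA M / (mA M + mB M)"
    define p0 where "p0 = mB M / (mB M + mC M)"
    note BO = bayes_opt[OF M posA posB posC, folded p0_def p1_def]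
    define g where "g = Lr p0 p1"
    define V where "V = (\<integral>t. g t \<partial>M)"
    have ub: "g t \<le> V" if "0 \<le> t" "t \<le> 1" for t
      using perturb[OF assms posA posB posC that, folded p0_def p1_def] by (simp add: g_def V_def)
    have intg: "integrable M g"
      unfolding g_def Lr_def[abs_def]
      using int_t2[OF M] int_tt[OF M] int_t2'[OF M] int_H[OF M]
      by (intro Bochner_Integration.integrable_diff integrable_minus integrable_mult_left) auto
    have nnD: "AE t in M. 0 \<le> V - g t" using AE01 by eventually_elim (use ub in auto)
    have intD: "integrable M (\<lambda>t. V - g t)" using intg by auto
    have "(\<integral>t. V - g t \<partial>M) = 0" using intg by (simp add: V_def prob_space)
    then have "AE t in M. V - g t = 0" using integral_nonneg_eq_0_iff_AE[OF intD nnD] by simp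
    then have AES: "AE t in M. t \<in> {t \<in> {0..1}. g t = V}" using AE01 by eventually_elim auto
    define S where "S = {t \<in> {0..1}. g t = V}"
    have Sm: "S \<in> sets borel" unfolding S_def g_def by measurable
    have S1: "emeasure M S = 1" using AES Sm by (intro emeasure_eq_1_AE) (auto simp: sM S_def)
    define T where "T = {t. 0 < t \<and> t < 1 \<and> g t = V}"
    have T: "finite T \<and> card T \<le> 2"
    proof (rule card_le2)
      fix x y z assume xyz: "x \<in> T" "y \<in> T" "z \<in> T" "x < y" "y < z"
      show False
      proof (rule three_max[of "ln p1" "ln (1 - p1)" "ln p0" "ln (1 - p0)" V x y z])
        fix t :: real assume "0 < t" "t < 1"
        then show "t * ln t + (1 - t) * ln (1 - t) - t^2 * ln p1 - t * (1 - t) * ln (1 - p1) - t * (1 - t) * ln p0 - (1 - t)^2 * ln (1 - p0) \<le> V"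
          using ub[of t] Lr_eq_G[of t p0 p1] by (simp add: g_def)
      qed (use xyz Lr_eq_G[of _ p0 p1] in \<open>auto simp: T_def g_def\<close>)
    qed
    have sub: "S \<subseteq> {0, 1} \<union> T" by (auto simp: S_def T_def)
    have fin: "finite ({0, 1} \<union> T)" using T by simp
    have "card S \<le> card ({0, 1::real} \<union> T)" by (rule card_mono[OF fin sub])
    also have "\<dots> \<le> card {0, 1::real} + card T" by (rule card_Un_le)
    also have "\<dots> \<le> 4" using T by simp
    finally show ?thesis using S1 finite_subset[OF sub fin] by (intro exI[of _ S]) (auto simp: S_def)
  qed
qed


end
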